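(* Let $H\in(\tfrac12,1)$, $\beta\in(1-2H,1]$, $\tau=T/M$, $t_i=i\tau$, and fix $m\in\{1,\dots,M\}$. With $R(z)=(1+z)^{-1}$ set $\mathcal T_N(i):=E_N(t_m-t_i)-R(\tau A_N)^{m-i}$ for $i=0,\dots,m-1$. Then there is a constant $C$ independent of $N,M,m$ and $x$ such that for all $x\in V$, $$\sum_{i,j=0}^{m-1}\int_{t_j}^{t_{j+1}}\int_{t_i}^{t_{i+1}}\big\langle\mathcal T_N(i)P_Nx,\;\mathcal T_N(j)P_Nx\big\rangle\,\phi(u-v)\,\mathrm du\,\mathrm dv\le C\,\tau^{2H+\beta-1}\|A_N^{\frac{\beta-1}{2}}P_Nx\|^2 .$$
   Context: $(V,\langle\cdot,\cdot\rangle,\|\cdot\|)$ is a real separable Hilbert space; $A$ is a linear, densely defined, positive self-adjoint unbounded operator with compact inverse, orthonormal eigenbasis $(e_i)$, $Ae_i=\lambda_ie_i$, $0<\lambda_1\le\lambda_2\le\dots\to\infty$. $P_N$ is the orthogonal projection onto $\mathrm{span}\{e_1,\dots,e_N\}$, $A_N=AP_N$ (with fractional powers taken on $\mathrm{span}\{e_1,\dots,e_N\}$), $E_N(t)=e^{-tA_N}$, and $R(\tau A_N)=(I+\tau A_N)^{-1}$. $\phi(y)=H(2H-1)|y|^{2H-2}$. *)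

theory Defs
  imports "HOL-Analysis.Analysis"
begin

text \<open>The operator A is represented by its spectral data: an orthonormal basis
  e 0, e 1, ... (0-based: e k is the paper's e_(k+1)) and eigenvalues lam k.\<close>

definition PN :: "(nat \<Rightarrow> 'a::real_inner) \<Rightarrow> nat \<Rightarrow> 'a \<Rightarrow> 'a" where
  "PN e N y = (\<Sum>k<N. inner y (e k) *\<^sub>R e k)"

text \<open>E_N(t) = exp(-t A_N), with A_N = A P_N (so E_N is the identity on the complement).\<close>
definition EN :: "(nat \<Rightarrow> real) \<Rightarrow> (nat \<Rightarrow> 'a::real_inner) \<Rightarrow> nat \<Rightarrow> real \<Rightarrow> 'a \<Rightarrow> 'a" where
  "EN lam e N t y = y - PN e N y + (\<Sum>k<N. (exp (- t * lam k) * inner y (e k)) *\<^sub>R e k)"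

definition RN :: "(nat \<Rightarrow> real) \<Rightarrow> (nat \<Rightarrow> 'a::real_inner) \<Rightarrow> nat \<Rightarrow> real \<Rightarrow> 'a \<Rightarrow> 'a" where
  "RN lam e N \<tau> y = y - PN e N y + (\<Sum>k<N. (inner y (e k) / (1 + \<tau> * lam k)) *\<^sub>R e k)"

definition AN_pow :: "(nat \<Rightarrow> real) \<Rightarrow> (nat \<Rightarrow> 'a::real_inner) \<Rightarrow> nat \<Rightarrow> real \<Rightarrow> 'a \<Rightarrow> 'a" where
  "AN_pow lam e N s y = (\<Sum>k<N. (lam k powr s * inner y (e k)) *\<^sub>R e k)"

definition phi :: "real \<Rightarrow> real \<Rightarrow> real" where
  "phi H y = H * (2 * H - 1) * \<bar>y\<bar> powr (2 * H - 2)"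

definition TN :: "(nat \<Rightarrow> real) \<Rightarrow> (nat \<Rightarrow> 'a::real_inner) \<Rightarrow> nat \<Rightarrow> real \<Rightarrow> nat \<Rightarrow> nat \<Rightarrow> 'a \<Rightarrow> 'a" where
  "TN lam e N \<tau> m i y = EN lam e N (real m * \<tau> - real i * \<tau>) y - (RN lam e N \<tau> ^^ (m - i)) y"

end

theory Submission
  imports Defs
begin


lemma Q_int:
  fixes p t :: real assumes p: "p > -1" and t: "t \<ge> 0"
  shows "integrable lborel (\<lambda>w. indicator {0..t} w * w powr p)"
    and "(LINT w|lborel. indicator {0..t} w * w powr p) = t powr (p+1) / (p+1)"
proof -
  have hi: "((\<lambda>x. x powr p) has_integral (t powr (p+1) / (p+1))) {0..t}"
    by (rule has_integral_powr_from_0[OF p t])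
  have nn: "(\<integral>\<^sup>+w. ennreal (indicator {0..t} w * w powr p) \<partial>lborel) = ennreal (t powr (p+1) / (p+1))"
    using nn_integral_has_integral_lebesgue[OF _ hi] by simp
  have m: "(\<lambda>w. indicator {0..t} w * w powr p :: real) \<in> borel_measurable lborel" by measurable
  have nneg: "AE w in lborel. 0 \<le> indicator {0..t} w * w powr p" by (auto simp: indicator_def)
  show "integrable lborel (\<lambda>w. indicator {0..t} w * w powr p)"
    by (rule integrableI_nn_integral_finite[OF m nneg nn])
  have "(LINT w|lborel. indicator {0..t} w * w powr p) = enn2real (ennreal (t powr (p+1) / (p+1)))"
    using integral_eq_nn_integral[OF m nneg] nn by simp
  also have "\<dots> = t powr (p+1) / (p+1)" using p by (simp)
  finally show "(LINT w|lborel. indicator {0..t} w * w powr p) = t powr (p+1) / (p+1)" .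
qed



lemma Q2_int:
  fixes p t v :: real assumes p: "p > -1" and t: "t \<ge> 0"
  defines "h \<equiv> \<lambda>u. indicator {0..t} (u - v) * (u - v) powr p + indicator {0..t} (v - u) * (v - u) powr p"
  shows "integrable lborel h" "(LINT u|lborel. h u) = 2 * (t powr (p+1) / (p+1))"
proof -
  let ?Q = "\<lambda>w. indicator {0..t} w * w powr p :: real"
  have i1: "integrable lborel (\<lambda>u. ?Q (- v + 1 * u))"
    by (rule lborel_integrable_real_affine[OF Q_int(1)[OF p t]]) simp
  have i2: "integrable lborel (\<lambda>u. ?Q (v + (-1) * u))"
    by (rule lborel_integrable_real_affine[OF Q_int(1)[OF p t]]) simp
  have e1: "(LINT u|lborel. ?Q (- v + 1 * u)) = t powr (p+1) / (p+1)"
    using lborel_integral_real_affine[of 1 ?Q "-v"] Q_int(2)[OF p t] by simp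
  have e2: "(LINT u|lborel. ?Q (v + (-1) * u)) = t powr (p+1) / (p+1)"
    using lborel_integral_real_affine[of "-1" ?Q "v"] Q_int(2)[OF p t] by simp
  have hh: "h = (\<lambda>u. ?Q (- v + 1 * u) + ?Q (v + (-1) * u))"
    by (auto simp: h_def)
  show "integrable lborel h" unfolding hh by (rule Bochner_Integration.integrable_add[OF i1 i2])
  show "(LINT u|lborel. h u) = 2 * (t powr (p+1) / (p+1))"
    unfolding hh using i1 i2 e1 e2 by (simp add: integral_add)
qed

lemma outer_bd:
  fixes F :: "real \<Rightarrow> real"
  assumes ab: "a \<le> b" and F: "\<And>v. \<bar>F v\<bar> \<le> B"
  shows "\<bar>LBINT v=a..b. F v\<bar> \<le> B * (b - a)"
proof -
  have "(LBINT v=a..b. F v) = (LINT v|lborel. indicator {a<..<b} v * F v)"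
    using ab by (simp add: interval_lebesgue_integral_def set_lebesgue_integral_def)
  also have "\<bar>\<dots>\<bar> \<le> (LINT v|lborel. norm (indicator {a<..<b} v * F v))"
    using integral_norm_bound[of lborel "\<lambda>v. indicator {a<..<b} v * F v"] by simp
  also have "\<dots> \<le> (LINT v|lborel. B * indicator {a<..<b} v)"
  proof (rule integral_mono_AE')
    show "integrable lborel (\<lambda>v. B * indicator {a<..<b} v :: real)" by (intro integrable_mult_right integrable_real_indicator) (use ab in \<open>auto simp: emeasure_lborel_Ioo\<close>)
    show "AE x in lborel. norm (indicator {a<..<b} x * F x) \<le> B * indicator {a<..<b} x"
      using F by (auto simp: indicator_def)
    have "0 \<le> B" using F[of 0] by simp
    then show "AE x in lborel. 0 \<le> B * (indicator {a<..<b} x :: real)" by (auto simp: indicator_def)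
  qed
  also have "\<dots> = B * (b - a)" using ab by simp
  finally show ?thesis .
qed



lemma ptwise:
  fixes p t d :: real assumes p: "p \<le> 0" and t: "t > 0"
  shows "\<bar>d\<bar> powr p \<le> indicator {0..t} d * d powr p + indicator {0..t} (- d) * (- d) powr p + t powr p"
proof (cases "\<bar>d\<bar> \<le> t")
  case True
  show ?thesis
  proof (cases "d \<ge> 0")
    case True
    with \<open>\<bar>d\<bar> \<le> t\<close> show ?thesis by (auto simp: indicator_def)
  next
    case False
    with \<open>\<bar>d\<bar> \<le> t\<close> show ?thesis by (auto simp: indicator_def)
  qed
next
  case False
  then have "\<bar>d\<bar> powr p \<le> t powr p" using p t by (intro powr_mono2') auto
  then show ?thesis by (auto simp: indicator_def)
qed

lemma inner_bd:
  fixes H a b \<tau> c v :: real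
  assumes H: "1/2 < H" "H < 1" and ab: "a \<le> b" "b - a \<le> \<tau>" and tau: "0 < \<tau>"
  shows "\<bar>LBINT u=a..b. c * phi H (u - v)\<bar> \<le> \<bar>c\<bar> * (2*H + H*(2*H-1)) * \<tau> powr (2*H-1)"
proof -
  define p where "p = 2*H - 2"
  have p: "p > -1" "p \<le> 0" using H by (auto simp: p_def)
  define h where "h \<equiv> \<lambda>u. indicator {0..\<tau>} (u - v) * (u - v) powr p + indicator {0..\<tau>} (v - u) * (v - u) powr p :: real"
  have hi: "integrable lborel h" and he: "(LINT u|lborel. h u) = 2 * (\<tau> powr (p+1) / (p+1))"
    using Q2_int[OF p(1), of \<tau> v] tau unfolding h_def by auto
  define K where "K = \<bar>c\<bar> * (H * (2*H-1))"
  have K: "K \<ge> 0" using H by (auto simp: K_def)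
  have "(LBINT u=a..b. c * phi H (u - v)) = (LINT u|lborel. indicator {a<..<b} u * (c * phi H (u - v)))"
    unfolding interval_lebesgue_integral_def set_lebesgue_integral_def
    using ab by (simp only: einterval_eq ereal_less_eq(3) if_True real_scaleR_def)
  also have "\<bar>\<dots>\<bar> \<le> (LINT u|lborel. norm (indicator {a<..<b} u * (c * phi H (u - v))))"
    using integral_norm_bound[of lborel "\<lambda>u. indicator {a<..<b} u * (c * phi H (u - v))"] by simp
  also have "\<dots> \<le> (LINT u|lborel. K * h u + (K * \<tau> powr p) * indicator {a<..<b} u)"
  proof (rule integral_mono_AE')
    show "integrable lborel (\<lambda>u. K * h u + (K * \<tau> powr p) * indicator {a<..<b} u)"
      using hi ab by (intro Bochner_Integration.integrable_add integrable_mult_right integrable_real_indicator)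
         (auto simp: emeasure_lborel_Ioo)
    have hnn: "0 \<le> h u" for u by (auto simp: h_def indicator_def)
    show "AE u in lborel. 0 \<le> K * h u + (K * \<tau> powr p) * indicator {a<..<b} u"
      using hnn K by (auto simp: indicator_def)
    show "AE u in lborel. norm (indicator {a<..<b} u * (c * phi H (u - v))) \<le> K * h u + (K * \<tau> powr p) * indicator {a<..<b} u"
    proof (rule AE_I2)
      fix u
      show "norm (indicator {a<..<b} u * (c * phi H (u - v))) \<le> K * h u + (K * \<tau> powr p) * indicator {a<..<b} u"
      proof (cases "u \<in> {a<..<b}")
        case False then have "indicator {a<..<b} u = (0::real)" by simp
        then show ?thesis using hnn[of u] K by simp
      next
        case True
        have pw: "\<bar>u - v\<bar> powr p \<le> h u + \<tau> powr p"
          using ptwise[OF p(2) tau, of "u - v"] by (simp add: h_def)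
        have "norm (indicator {a<..<b} u * (c * phi H (u - v))) = K * \<bar>u - v\<bar> powr p"
          using True H by (simp add: phi_def K_def p_def abs_mult)
        also have "\<dots> \<le> K * (h u + \<tau> powr p)" using pw K by (rule mult_left_mono)
        finally show ?thesis using True by (simp add: algebra_simps)
      qed
    qed
  qed
  also have "\<dots> = K * (2 * (\<tau> powr (p+1) / (p+1))) + K * \<tau> powr p * (b - a)"
    using hi ab he by (simp add: integral_add emeasure_lborel_Ioo)
  also have "\<dots> \<le> K * (2 * (\<tau> powr (p+1) / (p+1))) + K * \<tau> powr p * \<tau>"
    using ab K by (intro add_left_mono mult_left_mono) auto
  also have "\<dots> = \<bar>c\<bar> * (2*H + H*(2*H-1)) * \<tau> powr (2*H-1)"
  proof -
    have pp: "p + 1 = 2*H - 1" by (simp add: p_def)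
    have "\<tau> powr p * \<tau> = \<tau> powr (2*H-1)" using tau by (simp add: powr_add pp[symmetric])
    moreover have "\<tau> powr (p+1) = \<tau> powr (2*H-1)" by (simp add: pp)
    moreover have "2*H - 1 \<noteq> 0" using H by simp
    ultimately have "K * (2 * (\<tau> powr (p+1) / (p+1))) + K * \<tau> powr p * \<tau> = K * (2 * (\<tau> powr (2*H-1) / (2*H-1))) + K * \<tau> powr (2*H-1)"
      by (simp add: pp mult.assoc)
    also have "\<dots> = \<bar>c\<bar> * (2*H + H*(2*H-1)) * \<tau> powr (2*H-1)"
      using \<open>2*H - 1 \<noteq> 0\<close> by (simp add: K_def field_simps)
    finally show ?thesis .
  qed
  finally show ?thesis .
qed



definition vecN :: "(nat \<Rightarrow> 'a::real_inner) \<Rightarrow> nat \<Rightarrow> (nat \<Rightarrow> real) \<Rightarrow> 'a" where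
  "vecN e N c = (\<Sum>k<N. c k *\<^sub>R e k)"

context
  fixes e :: "nat \<Rightarrow> 'a::real_inner"
  assumes ortho: "\<And>i j. inner (e i) (e j) = (if i = j then 1 else 0)"
begin

lemma vec_inner_e: "inner (vecN e N c) (e j) = (if j < N then c j else 0)"
  by (simp add: vecN_def inner_sum_left ortho if_distrib[of "\<lambda>x. _ * x"] cong: if_cong)

lemma PN_vec: "PN e N (vecN e N c) = vecN e N c"
  unfolding PN_def by (simp add: vec_inner_e) (simp add: vecN_def)

lemma PN_eq_vec: "PN e N x = vecN e N (\<lambda>k. inner x (e k))"
  by (simp add: PN_def vecN_def)

lemma vec_cong: "(\<And>k. k < N \<Longrightarrow> c k = d k) \<Longrightarrow> vecN e N c = vecN e N d"
  by (simp add: vecN_def)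

lemma EN_vec: "EN lam e N t (vecN e N c) = vecN e N (\<lambda>k. exp (- t * lam k) * c k)"
  unfolding EN_def PN_vec by (simp add: vec_inner_e) (simp add: vecN_def)

lemma RN_vec: "RN lam e N \<tau> (vecN e N c) = vecN e N (\<lambda>k. c k / (1 + \<tau> * lam k))"
  unfolding RN_def PN_vec by (simp add: vec_inner_e) (simp add: vecN_def)

lemma RN_pow_vec: "(RN lam e N \<tau> ^^ n) (vecN e N c) = vecN e N (\<lambda>k. c k / (1 + \<tau> * lam k) ^ n)"
  by (induction n) (simp_all add: RN_vec field_simps)

lemma AN_vec: "AN_pow lam e N s (vecN e N c) = vecN e N (\<lambda>k. lam k powr s * c k)"
  unfolding AN_pow_def by (simp add: vec_inner_e) (simp add: vecN_def)

lemma vec_diff: "vecN e N c - vecN e N d = vecN e N (\<lambda>k. c k - d k)"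
  by (simp add: vecN_def sum_subtractf scaleR_diff_left)

lemma vec_inner: "inner (vecN e N c) (vecN e N d) = (\<Sum>k<N. c k * d k)"
  by (simp add: vecN_def [of e N d] inner_sum_right vec_inner_e mult.commute)

lemma vec_norm2: "(norm (vecN e N c))\<^sup>2 = (\<Sum>k<N. (c k)\<^sup>2)"
  by (simp add: power2_norm_eq_inner[symmetric] vec_inner[symmetric] power2_eq_square)

end


lemma geo_sum_bd:
  fixes z :: real assumes z: "z > 0" and S: "finite S"
  shows "(\<Sum>n\<in>S. \<bar>exp (-z) ^ n - 1 / (1 + z) ^ n\<bar>) \<le> 1"
    and "(\<Sum>n\<in>S. \<bar>exp (-z) ^ n - 1 / (1 + z) ^ n\<bar>) \<le> 1 / z"
proof -
  define r where "r = 1 / (1 + z)"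
  define q where "q = exp (-z)"
  have r: "0 < r" "r < 1" using z by (auto simp: r_def)
  have q: "0 < q" "q < 1" using z by (auto simp: q_def)
  have qr: "q \<le> r"
  proof -
    have "1 + z \<le> exp z" by (rule exp_ge_add_one_self)
    then have "1 / exp z \<le> 1 / (1 + z)" using z by (intro divide_left_mono) auto
    then show ?thesis by (simp add: q_def r_def exp_minus field_simps)
  qed
  define f where "f n = r ^ n - q ^ n" for n
  have fnn: "0 \<le> f n" for n using qr q by (auto simp: f_def intro: power_mono)
  have eq: "\<bar>exp (-z) ^ n - 1 / (1 + z) ^ n\<bar> = f n" for n
    using fnn[of n] by (simp add: f_def r_def q_def power_divide)
  have sr: "summable (\<lambda>n. r ^ n)" and sq: "summable (\<lambda>n. q ^ n)"
    using r q by (auto intro!: summable_geometric)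
  have sf: "summable f" unfolding f_def using sr sq by (rule summable_diff)
  have sumf: "suminf f = 1 / (1 - r) - 1 / (1 - q)"
    unfolding f_def using sr sq r q by (simp add: suminf_diff[symmetric] suminf_geometric)
  have "(\<Sum>n\<in>S. \<bar>exp (-z) ^ n - 1 / (1 + z) ^ n\<bar>) = sum f S" by (simp add: eq)
  also have "\<dots> \<le> suminf f" using sf S fnn by (intro sum_le_suminf) auto
  finally have A: "(\<Sum>n\<in>S. \<bar>exp (-z) ^ n - 1 / (1 + z) ^ n\<bar>) \<le> 1 / (1 - r) - 1 / (1 - q)"
    by (simp add: sumf)
  have rr: "1 / (1 - r) = 1 + 1 / z" using z by (simp add: r_def field_simps)
  have q1: "1 \<le> 1 / (1 - q)" using q by (simp add: field_simps)
  have q2: "1 - q \<le> z"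
  proof -
    have "1 + (-z) \<le> exp (-z)" by (rule exp_ge_add_one_self)
    then show ?thesis by (simp add: q_def)
  qed
  have q3: "1 / z \<le> 1 / (1 - q)" using q q2 z by (intro divide_left_mono) auto
  show "(\<Sum>n\<in>S. \<bar>exp (-z) ^ n - 1 / (1 + z) ^ n\<bar>) \<le> 1" using A rr q3 by linarith
  show "(\<Sum>n\<in>S. \<bar>exp (-z) ^ n - 1 / (1 + z) ^ n\<bar>) \<le> 1 / z" using A rr q1 by linarith
qed

lemma sq_bd:
  fixes z s \<beta> :: real assumes z: "z > 0" and s: "0 \<le> s" "s \<le> 1" "s \<le> 1 / z"
    and \<beta>: "-1 \<le> \<beta>" "\<beta> \<le> 1"
  shows "s\<^sup>2 \<le> z powr (\<beta> - 1)"
proof (cases "z \<le> 1")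
  case True
  have "s\<^sup>2 \<le> 1" using s by (simp add: power_le_one)
  also have "1 \<le> z powr (\<beta> - 1)"
    using powr_mono2'[of "\<beta> - 1" z 1] True z \<beta> by simp
  finally show ?thesis .
next
  case False
  have "s\<^sup>2 \<le> (1/z)\<^sup>2" using s by (intro power_mono) auto
  also have "\<dots> = z powr (-2)" using z by (simp add: powr_minus_divide power2_eq_square powr_numeral)
  also have "\<dots> \<le> z powr (\<beta> - 1)" using False \<beta> by (intro powr_mono) auto
  finally show ?thesis .
qed



lemma phi_bd:
  fixes H \<tau> c :: real
  assumes H: "1/2 < H" "H < 1" and tau: "0 < \<tau>"
  shows "\<bar>LBINT v = (real j * \<tau>)..(real (Suc j) * \<tau>).
           (LBINT u = (real i * \<tau>)..(real (Suc i) * \<tau>). c * phi H (u - v))\<bar>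
         \<le> \<bar>c\<bar> * (2*H + H*(2*H-1)) * \<tau> powr (2*H)"
proof -
  have ab: "real i * \<tau> \<le> real (Suc i) * \<tau>" "real (Suc i) * \<tau> - real i * \<tau> \<le> \<tau>"
    using tau by (auto simp: algebra_simps)
  have "\<bar>LBINT v = (real j * \<tau>)..(real (Suc j) * \<tau>).
           (LBINT u = (real i * \<tau>)..(real (Suc i) * \<tau>). c * phi H (u - v))\<bar>
        \<le> (\<bar>c\<bar> * (2*H + H*(2*H-1)) * \<tau> powr (2*H-1)) * (real (Suc j) * \<tau> - real j * \<tau>)"
    using tau by (intro outer_bd inner_bd[OF H ab tau]) (auto simp: algebra_simps)
  also have "\<dots> = \<bar>c\<bar> * (2*H + H*(2*H-1)) * (\<tau> powr (2*H-1) * \<tau>)"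
    by (simp add: algebra_simps)
  also have "\<tau> powr (2*H-1) * \<tau> = \<tau> powr (2*H)"
    using tau by (simp add: powr_add[symmetric] powr_diff)
  finally show ?thesis by simp
qed



lemma abs4: fixes a b x :: real shows "\<bar>a\<bar> * \<bar>x\<bar> * (\<bar>b\<bar> * \<bar>x\<bar>) = x * x * (\<bar>a\<bar> * \<bar>b\<bar>)"
proof -
  have "\<bar>a\<bar> * \<bar>x\<bar> * (\<bar>b\<bar> * \<bar>x\<bar>) = (\<bar>x\<bar> * \<bar>x\<bar>) * (\<bar>a\<bar> * \<bar>b\<bar>)" by algebra
  then show ?thesis by (simp only: abs_mult_self_eq)
qed

theorem mainTheorem11:
  fixes e :: "nat \<Rightarrow> 'a::{real_inner, complete_space}"
    and lam :: "nat \<Rightarrow> real" and H \<beta> T :: real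
  assumes ortho: "\<And>i j. inner (e i) (e j) = (if i = j then 1 else 0)"
    and complete: "\<And>x. (\<lambda>n. \<Sum>k<n. inner x (e k) *\<^sub>R e k) \<longlonglongrightarrow> x"
    and lam_pos: "0 < lam 0"
    and lam_mono: "mono lam"
    and lam_inf: "filterlim lam at_top sequentially"
    and H: "1/2 < H" "H < 1"
    and \<beta>: "1 - 2 * H < \<beta>" "\<beta> \<le> 1"
    and T: "0 < T"
  shows "\<exists>C. \<forall>N M m (x::'a). 0 < M \<and> 1 \<le> m \<and> m \<le> M \<longrightarrow>
    (let \<tau> = T / real M in
      (\<Sum>i<m. \<Sum>j<m.
         (LBINT v = (real j * \<tau>)..(real (Suc j) * \<tau>).
           (LBINT u = (real i * \<tau>)..(real (Suc i) * \<tau>).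
             (inner (TN lam e N \<tau> m i (PN e N x)) (TN lam e N \<tau> m j (PN e N x)) * phi H (u - v)))))
      \<le> C * \<tau> powr (2 * H + \<beta> - 1) * (norm (AN_pow lam e N ((\<beta> - 1) / 2) (PN e N x)))\<^sup>2)"
proof (intro exI allI impI)
  define K where "K = 2*H + H*(2*H-1)"
  have K: "K \<ge> 0" using H by (auto simp: K_def)
  fix N M m :: nat and x :: 'a
  assume Mm: "0 < M \<and> 1 \<le> m \<and> m \<le> M"
  define \<tau> where "\<tau> = T / real M"
  have tau: "\<tau> > 0" using Mm T by (auto simp: \<tau>_def)
  have lampos: "lam k > 0" for k using lam_pos lam_mono[unfolded mono_def, rule_format, of 0 k] by auto
  define xk where "xk k = inner x (e k)" for k
  define z where "z k = \<tau> * lam k" for k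
  have zpos: "z k > 0" for k using tau lampos by (simp add: z_def)
  define a where "a i k = exp (- z k) ^ (m - i) - 1 / (1 + z k) ^ (m - i)" for i k
  have TNv: "TN lam e N \<tau> m i (PN e N x) = vecN e N (\<lambda>k. a i k * xk k)" if "i < m" for i
  proof -
    have "real m * \<tau> - real i * \<tau> = real (m - i) * \<tau>" using that by (simp add: of_nat_diff algebra_simps)
    then have ex: "exp (- (real m * \<tau> - real i * \<tau>) * lam k) = exp (- z k) ^ (m - i)" for k
      by (simp add: z_def exp_of_nat_mult[symmetric] algebra_simps)
    show ?thesis
      unfolding TN_def PN_eq_vec[OF ortho] EN_vec[OF ortho] RN_pow_vec[OF ortho] vec_diff[OF ortho]
      by (rule vec_cong[OF ortho]) (simp only: ex a_def xk_def, simp add: algebra_simps diff_divide_distrib z_def)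
  qed
  define G where "G i j = (\<Sum>k<N. (a i k * xk k) * (a j k * xk k))" for i j
  have Gin: "inner (TN lam e N \<tau> m i (PN e N x)) (TN lam e N \<tau> m j (PN e N x)) = G i j"
    if "i < m" "j < m" for i j
    using that by (simp add: TNv vec_inner[OF ortho] G_def)
  define S where "S k = (\<Sum>i<m. \<bar>a i k\<bar>)" for k
  have Sbd: "(S k)\<^sup>2 \<le> z k powr (\<beta> - 1)" for k
  proof -
    have inj: "inj_on (\<lambda>i. m - i) {..<m}" by (auto simp: inj_on_def)
    have "S k = (\<Sum>n\<in>(\<lambda>i. m - i) ` {..<m}. \<bar>exp (- z k) ^ n - 1 / (1 + z k) ^ n\<bar>)"
      unfolding S_def a_def by (simp add: sum.reindex[OF inj])
    then have "S k \<le> 1" "S k \<le> 1 / z k" using geo_sum_bd[OF zpos[of k]] by auto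
    moreover have "S k \<ge> 0" by (simp add: S_def sum_nonneg)
    ultimately show ?thesis using zpos[of k] \<beta> H by (intro sq_bd) auto
  qed
  have step1: "(\<Sum>i<m. \<Sum>j<m.
         (LBINT v = (real j * \<tau>)..(real (Suc j) * \<tau>).
           (LBINT u = (real i * \<tau>)..(real (Suc i) * \<tau>).
             (inner (TN lam e N \<tau> m i (PN e N x)) (TN lam e N \<tau> m j (PN e N x)) * phi H (u - v)))))
      \<le> (\<Sum>i<m. \<Sum>j<m. \<bar>G i j\<bar> * K * \<tau> powr (2*H))"
  proof (intro sum_mono)
    fix i j assume ij: "i \<in> {..<m}" "j \<in> {..<m}"
    show "(LBINT v = (real j * \<tau>)..(real (Suc j) * \<tau>).
           (LBINT u = (real i * \<tau>)..(real (Suc i) * \<tau>).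
             (inner (TN lam e N \<tau> m i (PN e N x)) (TN lam e N \<tau> m j (PN e N x)) * phi H (u - v))))
          \<le> \<bar>G i j\<bar> * K * \<tau> powr (2*H)"
      using phi_bd[OF H tau, of j i "G i j"] ij by (simp add: Gin K_def)
  qed
  have step2: "(\<Sum>i<m. \<Sum>j<m. \<bar>G i j\<bar>) \<le> (\<Sum>k<N. (xk k)\<^sup>2 * (S k)\<^sup>2)"
  proof -
    have "(\<Sum>i<m. \<Sum>j<m. \<bar>G i j\<bar>) \<le> (\<Sum>i<m. \<Sum>j<m. \<Sum>k<N. (xk k)\<^sup>2 * (\<bar>a i k\<bar> * \<bar>a j k\<bar>))"
      unfolding G_def
      by (intro sum_mono order.trans[OF sum_abs]) (simp add: abs_mult power2_eq_square abs4)
    also have "\<dots> = (\<Sum>k<N. (xk k)\<^sup>2 * (\<Sum>i<m. \<Sum>j<m. \<bar>a i k\<bar> * \<bar>a j k\<bar>))"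
      by (simp add: sum_distrib_left sum.swap[of _ "{..<N}"])
    also have "\<dots> = (\<Sum>k<N. (xk k)\<^sup>2 * (S k)\<^sup>2)"
      by (simp add: S_def power2_eq_square sum_product)
    finally show ?thesis .
  qed
  have step3: "(\<Sum>k<N. (xk k)\<^sup>2 * (S k)\<^sup>2) \<le> (\<Sum>k<N. (xk k)\<^sup>2 * z k powr (\<beta> - 1))"
    by (intro sum_mono mult_left_mono Sbd) auto
  have rhs: "(norm (AN_pow lam e N ((\<beta> - 1) / 2) (PN e N x)))\<^sup>2 = (\<Sum>k<N. (xk k)\<^sup>2 * lam k powr (\<beta> - 1))"
  proof -
    have "(norm (AN_pow lam e N ((\<beta> - 1) / 2) (PN e N x)))\<^sup>2 = (\<Sum>k<N. (lam k powr ((\<beta> - 1) / 2) * xk k)\<^sup>2)"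
      by (simp add: PN_eq_vec[OF ortho] AN_vec[OF ortho] vec_norm2[OF ortho] xk_def)
    also have "\<dots> = (\<Sum>k<N. (xk k)\<^sup>2 * lam k powr (\<beta> - 1))"
    proof (rule sum.cong)
      fix k
      have "(lam k powr ((\<beta> - 1) / 2))\<^sup>2 = lam k powr (\<beta> - 1)"
        using lampos[of k] by (simp add: power2_eq_square powr_add[symmetric])
      then show "(lam k powr ((\<beta> - 1) / 2) * xk k)\<^sup>2 = (xk k)\<^sup>2 * lam k powr (\<beta> - 1)"
        by (simp add: power_mult_distrib)
    qed simp
    finally show ?thesis .
  qed
  have zs: "z k powr (\<beta> - 1) = \<tau> powr (\<beta> - 1) * lam k powr (\<beta> - 1)" for k
    using tau lampos[of k] by (simp add: z_def powr_mult)
  have tp: "\<tau> powr (2 * H + \<beta> - 1) = \<tau> powr (2*H) * \<tau> powr (\<beta> - 1)"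
    using tau by (simp add: powr_add[symmetric] add_diff_eq)
  have "(\<Sum>i<m. \<Sum>j<m.
         (LBINT v = (real j * \<tau>)..(real (Suc j) * \<tau>).
           (LBINT u = (real i * \<tau>)..(real (Suc i) * \<tau>).
             (inner (TN lam e N \<tau> m i (PN e N x)) (TN lam e N \<tau> m j (PN e N x)) * phi H (u - v)))))
      \<le> K * \<tau> powr (2*H) * (\<Sum>i<m. \<Sum>j<m. \<bar>G i j\<bar>)"
    using step1 by (simp add: sum_distrib_left mult_ac)
  also have "\<dots> \<le> K * \<tau> powr (2*H) * (\<Sum>k<N. (xk k)\<^sup>2 * z k powr (\<beta> - 1))"
    using step2 step3 K by (intro mult_left_mono) auto
  also have "\<dots> = K * \<tau> powr (2 * H + \<beta> - 1) * (norm (AN_pow lam e N ((\<beta> - 1) / 2) (PN e N x)))\<^sup>2"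
    unfolding rhs tp zs by (simp add: sum_distrib_left mult_ac)
  finally show "let \<tau> = T / real M in
      (\<Sum>i<m. \<Sum>j<m.
         (LBINT v = (real j * \<tau>)..(real (Suc j) * \<tau>).
           (LBINT u = (real i * \<tau>)..(real (Suc i) * \<tau>).
             (inner (TN lam e N \<tau> m i (PN e N x)) (TN lam e N \<tau> m j (PN e N x)) * phi H (u - v)))))
      \<le> K * \<tau> powr (2 * H + \<beta> - 1) * (norm (AN_pow lam e N ((\<beta> - 1) / 2) (PN e N x)))\<^sup>2"
    by (simp add: \<tau>_def Let_def)
qed

end
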